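(* Let $\mathit{VI}$ be a finite set of variables with $\#\mathit{VI}=n$, and let $\mathit{PSD}^{+}=\{sh\in\mathit{PSD}\mid\forall x\in\mathit{VI}:\{x\}\in sh\}$. Then $\mathit{PSD}^{\ddagger}:=\mathit{PSD}^{+}\sim\mathit{PS}=\{sh\in\mathit{PSD}\mid\mathit{VI}\in sh,\ \forall x\in\mathit{VI}:\{x\}\in sh\}$, and $\mathit{PSD}^{+}\sim\mathit{PSD}^{\ddagger}=\mathit{PS}$.
   Context: $\mathit{SG}=\wp(\mathit{VI})\setminus\{\emptyset\}$, $\mathit{SH}=\wp(\mathit{SG})$ ordered by inclusion. $\mathrm{pairs}(S)=\{T\subseteq S\mid\#T=2\}$, $\mathrm{pairs}(sh)=\bigcup_{S'\in sh}\mathrm{pairs}(S')$, $\mathit{PS}=\{\rho_{\mathit{PS}}(sh)\mid sh\in\mathit{SH}\}$ where $\rho_{\mathit{PS}}(sh)=\{S\in\mathit{SG}\mid\mathrm{pairs}(S)\subseteq\mathrm{pairs}(sh)\}$. $\mathit{PSD}=\{\rho_{\mathit{PSD}}(sh)\mid sh\in\mathit{SH}\}$ where $\rho_{\mathit{PSD}}(sh)=\{\,S\in\mathit{SG}\mid \forall T\subseteq S:\ \#T<2\implies S=\bigcup\{U\in sh\mid T\subseteq U\subseteq S\}\,\}$. Upper closure operators on a complete lattice $C$ are identified with their images (subsets closed under arbitrary meets); $\mathrm{uco}(C)$ is ordered by $\rho_1\sqsubseteq\rho_2$ iff $\rho_2(C)\subseteq\rho_1(C)$, with reduced product $\sqcap$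 the glb. For $D\subseteq C$ the image of some $\rho\in\mathrm{uco}(C)$, $C\sim D=\mathrm{lub}\{\rho_2\in\mathrm{uco}(C)\mid\rho\sqcap\rho_2=\mathit{id}_C\}$ (weak pseudo-complement); here $C=\mathit{PSD}^{+}$ (a complete lattice under inclusion) and $\mathit{PS}\subseteq\mathit{PSD}^{+}$. *)

theory Defs
  imports Main
begin

definition SG :: "'a set \<Rightarrow> 'a set set" where
  "SG VI = Pow VI - {{}}"

definition SH :: "'a set \<Rightarrow> 'a set set set" where
  "SH VI = Pow (SG VI)"

definition pairs :: "'a set \<Rightarrow> 'a set set" where
  "pairs S = {T. T \<subseteq> S \<and> card T = 2}"

definition pairs_sh :: "'a set set \<Rightarrow> 'a set set" where
  "pairs_sh sh = (\<Union>S'\<in>sh. pairs S')"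

definition rho_PS :: "'a set \<Rightarrow> 'a set set \<Rightarrow> 'a set set" where
  "rho_PS VI sh = {S \<in> SG VI. pairs S \<subseteq> pairs_sh sh}"

definition PS :: "'a set \<Rightarrow> 'a set set set" where
  "PS VI = rho_PS VI ` SH VI"

definition rho_PSD :: "'a set \<Rightarrow> 'a set set \<Rightarrow> 'a set set" where
  "rho_PSD VI sh = {S \<in> SG VI. \<forall>T. T \<subseteq> S \<and> card T < 2 \<longrightarrow>
       S = \<Union>{U \<in> sh. T \<subseteq> U \<and> U \<subseteq> S}}"

definition PSD :: "'a set \<Rightarrow> 'a set set set" where
  "PSD VI = rho_PSD VI ` SH VI"

definition PSD_plus :: "'a set \<Rightarrow> 'a set set set" where
  "PSD_plus VI = {sh \<in> PSD VI. \<forall>x\<in>VI. {x} \<in> sh}"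

text \<open>Generic upper closure operators on a complete lattice C (a family of sets
  ordered by inclusion), identified with their images.\<close>

definition lat_glb :: "'b set set \<Rightarrow> 'b set set \<Rightarrow> 'b set" where
  "lat_glb C X = (THE y. y \<in> C \<and> (\<forall>x\<in>X. y \<subseteq> x) \<and>
                         (\<forall>z\<in>C. (\<forall>x\<in>X. z \<subseteq> x) \<longrightarrow> z \<subseteq> y))"

definition is_uco :: "'b set set \<Rightarrow> 'b set set \<Rightarrow> bool" where
  "is_uco C D \<longleftrightarrow> D \<subseteq> C \<and> (\<forall>X. X \<subseteq> D \<longrightarrow> lat_glb C X \<in> D)"

text \<open>rho1 below rho2 iff image of rho2 is contained in image of rho1.\<close>
definition uco_le :: "'b set set \<Rightarrow> 'b set set \<Rightarrow> bool" where
  "uco_le D1 D2 \<longleftrightarrow> D2 \<subseteq> D1"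

definition uco_lub :: "'b set set \<Rightarrow> 'b set set set \<Rightarrow> 'b set set" where
  "uco_lub C S = (THE M. is_uco C M \<and> (\<forall>N\<in>S. uco_le N M) \<and>
      (\<forall>M'. is_uco C M' \<and> (\<forall>N\<in>S. uco_le N M') \<longrightarrow> uco_le M M'))"

definition uco_glb :: "'b set set \<Rightarrow> 'b set set set \<Rightarrow> 'b set set" where
  "uco_glb C S = (THE M. is_uco C M \<and> (\<forall>N\<in>S. uco_le M N) \<and>
      (\<forall>M'. is_uco C M' \<and> (\<forall>N\<in>S. uco_le M' N) \<longrightarrow> uco_le M' M))"

definition reduced_product :: "'b set set \<Rightarrow> 'b set set \<Rightarrow> 'b set set \<Rightarrow> 'b set set" where
  "reduced_product C D1 D2 = uco_glb C {D1, D2}"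

text \<open>Weak pseudo-complement C ~ D; the identity uco id_C has image C.\<close>
definition wpc :: "'b set set \<Rightarrow> 'b set set \<Rightarrow> 'b set set" where
  "wpc C D = uco_lub C {D2. is_uco C D2 \<and> reduced_product C D D2 = C}"

end

theory Submission
  imports Defs
begin

section \<open>Generic facts on Moore families\<close>

definition moore :: "'b set set \<Rightarrow> 'b set \<Rightarrow> bool" where
  "moore C tp \<longleftrightarrow> C \<subseteq> Pow tp \<and> (\<forall>X. X \<subseteq> C \<longrightarrow> tp \<inter> \<Inter>X \<in> C)"

definition Mc :: "'b set \<Rightarrow> 'b set set \<Rightarrow> 'b set set" where
  "Mc tp Y = {tp \<inter> \<Inter>X | X. X \<subseteq> Y}"

lemma moore_D: "moore C tp \<Longrightarrow> X \<subseteq> C \<Longrightarrow> tp \<inter> \<Inter>X \<in> C"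
  unfolding moore_def by blast

lemma moore_sub: "moore C tp \<Longrightarrow> c \<in> C \<Longrightarrow> c \<subseteq> tp"
  unfolding moore_def by blast

lemma glb_eq:
  assumes m: "moore C tp" and X: "X \<subseteq> C"
  shows "lat_glb C X = tp \<inter> \<Inter>X"
  unfolding lat_glb_def
proof (rule the_equality)
  have a: "tp \<inter> \<Inter>X \<in> C" using moore_D[OF m X] .
  show "tp \<inter> \<Inter>X \<in> C \<and> (\<forall>x\<in>X. tp \<inter> \<Inter>X \<subseteq> x) \<and>
        (\<forall>z\<in>C. (\<forall>x\<in>X. z \<subseteq> x) \<longrightarrow> z \<subseteq> tp \<inter> \<Inter>X)"
  proof (intro conjI ballI impI)
    fix z assume "z \<in> C" "\<forall>x\<in>X. z \<subseteq> x"
    then show "z \<subseteq> tp \<inter> \<Inter>X" using moore_sub[OF m] by blast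
  qed (use a in auto)
next
  fix y assume y: "y \<in> C \<and> (\<forall>x\<in>X. y \<subseteq> x) \<and> (\<forall>z\<in>C. (\<forall>x\<in>X. z \<subseteq> x) \<longrightarrow> z \<subseteq> y)"
  have a: "tp \<inter> \<Inter>X \<in> C" using moore_D[OF m X] .
  have b: "\<forall>x\<in>X. tp \<inter> \<Inter>X \<subseteq> x" by blast
  have "tp \<inter> \<Inter>X \<subseteq> y" using y a b by simp
  moreover have "y \<subseteq> tp" using y moore_sub[OF m] by simp
  moreover have "y \<subseteq> \<Inter>X" using y by (simp add: Inf_greatest)
  ultimately show "y = tp \<inter> \<Inter>X" by blast
qed

lemma uco_iff:
  assumes m: "moore C tp"
  shows "is_uco C D \<longleftrightarrow> D \<subseteq> C \<and> (\<forall>X. X \<subseteq> D \<longrightarrow> tp \<inter> \<Inter>X \<in> D)"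
proof
  assume u: "is_uco C D"
  then have "D \<subseteq> C" by (simp add: is_uco_def)
  moreover have "\<forall>X. X \<subseteq> D \<longrightarrow> tp \<inter> \<Inter>X \<in> D"
  proof (intro allI impI)
    fix X assume "X \<subseteq> D"
    then have "lat_glb C X \<in> D" "X \<subseteq> C" using u \<open>D \<subseteq> C\<close> by (auto simp: is_uco_def)
    then show "tp \<inter> \<Inter>X \<in> D" using glb_eq[OF m] by simp
  qed
  ultimately show "D \<subseteq> C \<and> (\<forall>X. X \<subseteq> D \<longrightarrow> tp \<inter> \<Inter>X \<in> D)" by blast
next
  assume h: "D \<subseteq> C \<and> (\<forall>X. X \<subseteq> D \<longrightarrow> tp \<inter> \<Inter>X \<in> D)"
  show "is_uco C D" unfolding is_uco_def
  proof (intro conjI allI impI)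
    show "D \<subseteq> C" using h by blast
    fix X assume X: "X \<subseteq> D"
    then have "X \<subseteq> C" using h by blast
    then show "lat_glb C X \<in> D" using glb_eq[OF m] h X by simp
  qed
qed

lemma Mc_uco:
  assumes m: "moore C tp" and Y: "Y \<subseteq> C"
  shows "is_uco C (Mc tp Y)"
  unfolding uco_iff[OF m]
proof (intro conjI allI impI)
  show "Mc tp Y \<subseteq> C" unfolding Mc_def using moore_D[OF m] Y by blast
next
  fix X assume X: "X \<subseteq> Mc tp Y"
  then have "\<forall>x\<in>X. \<exists>Z. Z \<subseteq> Y \<and> x = tp \<inter> \<Inter>Z" unfolding Mc_def by blast
  then obtain f where f: "\<forall>x\<in>X. f x \<subseteq> Y \<and> x = tp \<inter> \<Inter>(f x)" by metis
  have "tp \<inter> \<Inter>X = tp \<inter> \<Inter>(\<Union>(f ` X))"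
  proof
    show "tp \<inter> \<Inter>X \<subseteq> tp \<inter> \<Inter>(\<Union>(f ` X))"
    proof
      fix z assume z: "z \<in> tp \<inter> \<Inter>X"
      show "z \<in> tp \<inter> \<Inter>(\<Union>(f ` X))"
      proof -
        have "\<forall>x\<in>X. z \<in> tp \<inter> \<Inter>(f x)" using z f by auto
        then show ?thesis using z by auto
      qed
    qed
  next
    show "tp \<inter> \<Inter>(\<Union>(f ` X)) \<subseteq> tp \<inter> \<Inter>X"
    proof
      fix z assume z: "z \<in> tp \<inter> \<Inter>(\<Union>(f ` X))"
      have "\<forall>x\<in>X. z \<in> tp \<inter> \<Inter>(f x)" using z by auto
      then have "\<forall>x\<in>X. z \<in> x" using f by auto
      then show "z \<in> tp \<inter> \<Inter>X" using z by auto
    qed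
  qed
  moreover have "\<Union>(f ` X) \<subseteq> Y" using f by blast
  ultimately show "tp \<inter> \<Inter>X \<in> Mc tp Y" unfolding Mc_def by blast
qed

lemma Mc_sub:
  assumes m: "moore C tp" and u: "is_uco C D" and Y: "Y \<subseteq> D"
  shows "Mc tp Y \<subseteq> D"
  using u Y unfolding uco_iff[OF m] Mc_def by blast

lemma sub_Mc:
  assumes m: "moore C tp" and Y: "Y \<subseteq> C"
  shows "Y \<subseteq> Mc tp Y"
proof
  fix y assume y: "y \<in> Y"
  then have "y \<subseteq> tp" using moore_sub[OF m] Y by blast
  then have "y = tp \<inter> \<Inter>{y}" by auto
  then show "y \<in> Mc tp Y" using y unfolding Mc_def by blast
qed

lemma rp_eq:
  assumes m: "moore C tp" and u1: "is_uco C D1" and u2: "is_uco C D2"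
  shows "reduced_product C D1 D2 = Mc tp (D1 \<union> D2)"
proof -
  have sub: "D1 \<union> D2 \<subseteq> C" using u1 u2 by (simp add: is_uco_def)
  have U: "is_uco C (Mc tp (D1 \<union> D2))" using Mc_uco[OF m sub] .
  have S: "D1 \<union> D2 \<subseteq> Mc tp (D1 \<union> D2)" using sub_Mc[OF m sub] .
  show ?thesis
    unfolding reduced_product_def uco_glb_def
  proof (rule the_equality)
    show "is_uco C (Mc tp (D1 \<union> D2)) \<and> (\<forall>N\<in>{D1, D2}. uco_le (Mc tp (D1 \<union> D2)) N) \<and>
      (\<forall>M'. is_uco C M' \<and> (\<forall>N\<in>{D1, D2}. uco_le M' N) \<longrightarrow> uco_le M' (Mc tp (D1 \<union> D2)))"
      using U S Mc_sub[OF m] unfolding uco_le_def by auto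
  next
    fix M assume M: "is_uco C M \<and> (\<forall>N\<in>{D1, D2}. uco_le M N) \<and>
      (\<forall>M'. is_uco C M' \<and> (\<forall>N\<in>{D1, D2}. uco_le M' N) \<longrightarrow> uco_le M' M)"
    have "Mc tp (D1 \<union> D2) \<subseteq> M" using M Mc_sub[OF m] unfolding uco_le_def by auto
    moreover have "M \<subseteq> Mc tp (D1 \<union> D2)" using M U S unfolding uco_le_def by auto
    ultimately show "M = Mc tp (D1 \<union> D2)" by blast
  qed
qed

lemma lub_eq:
  assumes m: "moore C tp" and ne: "F \<noteq> {}" and u: "\<forall>N\<in>F. is_uco C N"
  shows "uco_lub C F = \<Inter>F"
proof -
  have U: "is_uco C (\<Inter>F)" unfolding uco_iff[OF m]
  proof (intro conjI allI impI)
    obtain N where N: "N \<in> F" using ne by blast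
    then have "N \<subseteq> C" using u by (auto simp: is_uco_def)
    then show "\<Inter>F \<subseteq> C" using N by (meson Inf_lower order_trans)
  next
    fix X assume X: "X \<subseteq> \<Inter>F"
    have "tp \<inter> \<Inter>X \<in> N" if N: "N \<in> F" for N
    proof -
      have "X \<subseteq> N" using X N by (simp add: le_Inf_iff)
      moreover have "is_uco C N" using u N by simp
      ultimately show ?thesis using uco_iff[OF m] by simp
    qed
    then show "tp \<inter> \<Inter>X \<in> \<Inter>F" by simp
  qed
  show ?thesis unfolding uco_lub_def
  proof (rule the_equality)
    have a: "\<forall>N\<in>F. uco_le N (\<Inter>F)" unfolding uco_le_def by (simp add: Inf_lower)
    have b: "\<forall>M'. is_uco C M' \<and> (\<forall>N\<in>F. uco_le N M') \<longrightarrow> uco_le (\<Inter>F) M'"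
      unfolding uco_le_def by (simp add: le_Inf_iff)
    show "is_uco C (\<Inter>F) \<and> (\<forall>N\<in>F. uco_le N (\<Inter>F)) \<and>
      (\<forall>M'. is_uco C M' \<and> (\<forall>N\<in>F. uco_le N M') \<longrightarrow> uco_le (\<Inter>F) M')"
      using U a b by simp
  next
    fix M assume M: "is_uco C M \<and> (\<forall>N\<in>F. uco_le N M) \<and>
      (\<forall>M'. is_uco C M' \<and> (\<forall>N\<in>F. uco_le N M') \<longrightarrow> uco_le M M')"
    have "M \<subseteq> \<Inter>F" using M unfolding uco_le_def by (simp add: le_Inf_iff)
    moreover have "\<forall>N\<in>F. uco_le N (\<Inter>F)" unfolding uco_le_def by (simp add: Inf_lower)
    then have "uco_le M (\<Inter>F)" using M U by blast
    then have "\<Inter>F \<subseteq> M" unfolding uco_le_def .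
    ultimately show "M = \<Inter>F" by (rule antisym)
  qed
qed

lemma wpc_lemma:
  assumes m: "moore C tp"
    and uD: "is_uco C D" and uE: "is_uco C E"
    and gen: "Mc tp (D \<union> E) = C"
    and KE: "K \<subseteq> E" and EK: "E \<subseteq> Mc tp K" and KD: "K \<inter> D = {}"
    and irr: "\<forall>k\<in>K. \<forall>X. X \<subseteq> C \<and> k = tp \<inter> \<Inter>X \<longrightarrow> k \<in> X"
  shows "wpc C D = E"
proof -
  define F where "F = {D2. is_uco C D2 \<and> reduced_product C D D2 = C}"
  have EF: "E \<in> F" unfolding F_def using uE rp_eq[OF m uD uE] gen by simp
  have allu: "\<forall>N\<in>F. is_uco C N" unfolding F_def by blast
  have w: "wpc C D = \<Inter>F" unfolding wpc_def F_def[symmetric] using lub_eq[OF m _ allu] EF by blast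
  have "E \<subseteq> D2" if D2: "D2 \<in> F" for D2
  proof -
    have u2: "is_uco C D2" and g2: "Mc tp (D \<union> D2) = C"
      using D2 rp_eq[OF m uD] unfolding F_def by auto
    have "K \<subseteq> D2"
    proof
      fix k assume k: "k \<in> K"
      then have "k \<in> C" using KE uE by (auto simp: is_uco_def)
      then obtain X where X: "X \<subseteq> D \<union> D2" "k = tp \<inter> \<Inter>X" using g2 unfolding Mc_def by blast
      have "X \<subseteq> C" using X uD u2 by (auto simp: is_uco_def)
      then have "k \<in> X" using irr k X by blast
      then show "k \<in> D2" using X KD k by blast
    qed
    then have "Mc tp K \<subseteq> D2" using Mc_sub[OF m u2] by blast
    then show ?thesis using EK by blast
  qed
  then have "E \<subseteq> \<Inter>F" by blast
  moreover have "\<Inter>F \<subseteq> E" using EF by blast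
  ultimately show ?thesis using w by blast
qed

lemma card_lt2:
  assumes "finite T" "card T < 2"
  shows "T = {} \<or> (\<exists>a. T = {a})"
proof -
  have "card T = 0 \<or> card T = 1" using assms(2) by linarith
  then show ?thesis using assms(1) by (auto simp: card_1_singleton_iff)
qed

lemma rho_sub: "rho_PSD VI sh \<subseteq> SG VI"
  unfolding rho_PSD_def by blast

lemma rho_ext:
  assumes "sh \<subseteq> SG VI"
  shows "sh \<subseteq> rho_PSD VI sh"
proof
  fix S assume S: "S \<in> sh"
  have "\<forall>T. T \<subseteq> S \<and> card T < 2 \<longrightarrow> S = \<Union>{U \<in> sh. T \<subseteq> U \<and> U \<subseteq> S}"
    using S by blast
  then show "S \<in> rho_PSD VI sh" unfolding rho_PSD_def using S assms by blast
qed

lemma rho_idem: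
  "rho_PSD VI (rho_PSD VI sh) \<subseteq> rho_PSD VI sh"
proof
  fix S assume S: "S \<in> rho_PSD VI (rho_PSD VI sh)"
  have SG: "S \<in> SG VI" using S rho_sub by blast
  have h: "\<And>T. T \<subseteq> S \<Longrightarrow> card T < 2 \<Longrightarrow> S = \<Union>{U \<in> rho_PSD VI sh. T \<subseteq> U \<and> U \<subseteq> S}"
    using S unfolding rho_PSD_def by blast
  have "S = \<Union>{U \<in> sh. T \<subseteq> U \<and> U \<subseteq> S}" if T: "T \<subseteq> S" "card T < 2" for T
  proof
    show "\<Union>{U \<in> sh. T \<subseteq> U \<and> U \<subseteq> S} \<subseteq> S" by blast
  next
    show "S \<subseteq> \<Union>{U \<in> sh. T \<subseteq> U \<and> U \<subseteq> S}"
    proof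
      fix a assume a: "a \<in> S"
      then obtain U where U: "U \<in> rho_PSD VI sh" "T \<subseteq> U" "U \<subseteq> S" "a \<in> U"
        using h[OF T] by blast
      have "U = \<Union>{V \<in> sh. T \<subseteq> V \<and> V \<subseteq> U}" using U(1,2) T(2) unfolding rho_PSD_def by blast
      then obtain V where "V \<in> sh" "T \<subseteq> V" "V \<subseteq> U" "a \<in> V" using U(4) by blast
      then show "a \<in> \<Union>{U \<in> sh. T \<subseteq> U \<and> U \<subseteq> S}" using U(3) by blast
    qed
  qed
  then show "S \<in> rho_PSD VI sh" unfolding rho_PSD_def using SG by blast
qed

lemma PSD_iff: "sh \<in> PSD VI \<longleftrightarrow> sh \<subseteq> SG VI \<and> rho_PSD VI sh \<subseteq> sh"
proof
  assume "sh \<in> PSD VI"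
  then obtain sh0 where sh: "sh = rho_PSD VI sh0" unfolding PSD_def by blast
  then show "sh \<subseteq> SG VI \<and> rho_PSD VI sh \<subseteq> sh" using rho_sub rho_idem by blast
next
  assume a: "sh \<subseteq> SG VI \<and> rho_PSD VI sh \<subseteq> sh"
  then have "sh = rho_PSD VI sh" using rho_ext by blast
  moreover have "sh \<in> SH VI" using a unfolding SH_def by blast
  ultimately show "sh \<in> PSD VI" unfolding PSD_def by blast
qed

lemma rho_D:
  assumes "S \<in> rho_PSD VI sh" "T \<subseteq> S" "card T < 2"
  shows "S = \<Union>{U \<in> sh. T \<subseteq> U \<and> U \<subseteq> S}"
  using assms unfolding rho_PSD_def by simp

lemma rho_I:
  assumes "S \<in> SG VI" "\<And>T. T \<subseteq> S \<Longrightarrow> card T < 2 \<Longrightarrow> S = \<Union>{U \<in> sh. T \<subseteq> U \<and> U \<subseteq> S}"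
  shows "S \<in> rho_PSD VI sh"
  using assms unfolding rho_PSD_def by simp

lemma rho_char:
  assumes fin: "finite VI" and sub: "sh \<subseteq> SG VI" and sing: "\<forall>x\<in>VI. {x} \<in> sh"
  shows "rho_PSD VI sh = {S \<in> SG VI. \<forall>a\<in>S. \<forall>b\<in>S. \<exists>U\<in>sh. a \<in> U \<and> b \<in> U \<and> U \<subseteq> S}"
proof
  show "rho_PSD VI sh \<subseteq> {S \<in> SG VI. \<forall>a\<in>S. \<forall>b\<in>S. \<exists>U\<in>sh. a \<in> U \<and> b \<in> U \<and> U \<subseteq> S}"
  proof
    fix S assume S: "S \<in> rho_PSD VI sh"
    have SG: "S \<in> SG VI" using S rho_sub by blast
    have "\<exists>U\<in>sh. a \<in> U \<and> b \<in> U \<and> U \<subseteq> S" if ab: "a \<in> S" "b \<in> S" for a b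
    proof -
      have "{a} \<subseteq> S" "card {a} < 2" using ab by auto
      then have eqS: "S = \<Union>{U \<in> sh. {a} \<subseteq> U \<and> U \<subseteq> S}" using rho_D[OF S] by blast
      have "b \<in> \<Union>{U \<in> sh. {a} \<subseteq> U \<and> U \<subseteq> S}" using ab(2) eqS by metis
      then show ?thesis by blast
    qed
    then show "S \<in> {S \<in> SG VI. \<forall>a\<in>S. \<forall>b\<in>S. \<exists>U\<in>sh. a \<in> U \<and> b \<in> U \<and> U \<subseteq> S}"
      using SG by blast
  qed
next
  show "{S \<in> SG VI. \<forall>a\<in>S. \<forall>b\<in>S. \<exists>U\<in>sh. a \<in> U \<and> b \<in> U \<and> U \<subseteq> S} \<subseteq> rho_PSD VI sh"
  proof
    fix S assume S: "S \<in> {S \<in> SG VI. \<forall>a\<in>S. \<forall>b\<in>S. \<exists>U\<in>sh. a \<in> U \<and> b \<in> U \<and> U \<subseteq> S}"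
    have SG: "S \<in> SG VI" and cov: "\<forall>a\<in>S. \<forall>b\<in>S. \<exists>U\<in>sh. a \<in> U \<and> b \<in> U \<and> U \<subseteq> S"
      using S by auto
    have SVI: "S \<subseteq> VI" using SG unfolding SG_def by blast
    have "S = \<Union>{U \<in> sh. T \<subseteq> U \<and> U \<subseteq> S}" if T: "T \<subseteq> S" "card T < 2" for T
    proof
      show "\<Union>{U \<in> sh. T \<subseteq> U \<and> U \<subseteq> S} \<subseteq> S" by blast
    next
      have "T \<subseteq> VI" using T(1) SVI by (rule order_trans)
      then have "finite T" using fin by (rule finite_subset)
      then have c: "T = {} \<or> (\<exists>a. T = {a})" using T(2) by (rule card_lt2)
      show "S \<subseteq> \<Union>{U \<in> sh. T \<subseteq> U \<and> U \<subseteq> S}"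
      proof
        fix b assume b: "b \<in> S"
        show "b \<in> \<Union>{U \<in> sh. T \<subseteq> U \<and> U \<subseteq> S}"
        proof (cases "T = {}")
          case True
          have "{b} \<in> sh" using sing b SVI by blast
          moreover have "T \<subseteq> {b}" "{b} \<subseteq> S" using True b by auto
          ultimately have "{b} \<in> {U \<in> sh. T \<subseteq> U \<and> U \<subseteq> S}" by blast
          then show ?thesis by blast
        next
          case False
          then obtain a where a: "T = {a}" using c by blast
          then have "a \<in> S" using T by blast
          then obtain U where U: "U \<in> sh" "a \<in> U" "b \<in> U" "U \<subseteq> S" using cov b by blast
          then have "U \<in> {U \<in> sh. T \<subseteq> U \<and> U \<subseteq> S}" using a by blast
          then show ?thesis using U(3) by blast
        qed
      qed
    qed
    then show "S \<in> rho_PSD VI sh" using rho_I[OF SG] by blast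
  qed
qed

definition closedsh :: "'a set \<Rightarrow> 'a set set \<Rightarrow> bool" where
  "closedsh VI sh \<longleftrightarrow> sh \<subseteq> SG VI \<and> (\<forall>x\<in>VI. {x} \<in> sh) \<and>
     (\<forall>S\<in>SG VI. (\<forall>a\<in>S. \<forall>b\<in>S. \<exists>U\<in>sh. a \<in> U \<and> b \<in> U \<and> U \<subseteq> S) \<longrightarrow> S \<in> sh)"

lemma closedsh_sub: "closedsh VI sh \<Longrightarrow> sh \<subseteq> SG VI"
  unfolding closedsh_def by simp

lemma closedsh_sing: "closedsh VI sh \<Longrightarrow> x \<in> VI \<Longrightarrow> {x} \<in> sh"
  unfolding closedsh_def by simp

lemma closedsh_cl: "closedsh VI sh \<Longrightarrow> S \<in> SG VI \<Longrightarrow>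
    (\<And>a b. a \<in> S \<Longrightarrow> b \<in> S \<Longrightarrow> \<exists>U\<in>sh. a \<in> U \<and> b \<in> U \<and> U \<subseteq> S) \<Longrightarrow> S \<in> sh"
  unfolding closedsh_def by blast

lemma CL:
  assumes fin: "finite VI"
  shows "sh \<in> PSD_plus VI \<longleftrightarrow> closedsh VI sh"
proof
  assume a: "sh \<in> PSD_plus VI"
  then have sub: "sh \<subseteq> SG VI" and r: "rho_PSD VI sh \<subseteq> sh" and sing: "\<forall>x\<in>VI. {x} \<in> sh"
    unfolding PSD_plus_def PSD_iff by auto
  show "closedsh VI sh" unfolding closedsh_def using sub sing r rho_char[OF fin sub sing] by blast
next
  assume a: "closedsh VI sh"
  then have sub: "sh \<subseteq> SG VI" and sing: "\<forall>x\<in>VI. {x} \<in> sh" unfolding closedsh_def by auto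
  have "rho_PSD VI sh \<subseteq> sh" using a unfolding rho_char[OF fin sub sing] closedsh_def by blast
  then show "sh \<in> PSD_plus VI" unfolding PSD_plus_def PSD_iff using sub sing by blast
qed

definition cliq :: "'a set \<Rightarrow> ('a \<Rightarrow> 'a \<Rightarrow> bool) \<Rightarrow> 'a set set" where
  "cliq VI E = {S \<in> SG VI. \<forall>a\<in>S. \<forall>b\<in>S. a \<noteq> b \<longrightarrow> E a b}"

definition mi :: "'a set \<Rightarrow> 'a set \<Rightarrow> 'a \<Rightarrow> 'a \<Rightarrow> 'a set set" where
  "mi VI S x y = SG VI - {U. x \<in> U \<and> y \<in> U \<and> U \<subseteq> S}"

lemma pairs_cond:
  "pairs S \<subseteq> pairs_sh sh \<longleftrightarrow> (\<forall>a\<in>S. \<forall>b\<in>S. a \<noteq> b \<longrightarrow> (\<exists>U\<in>sh. a \<in> U \<and> b \<in> U))"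
proof
  assume h: "pairs S \<subseteq> pairs_sh sh"
  show "\<forall>a\<in>S. \<forall>b\<in>S. a \<noteq> b \<longrightarrow> (\<exists>U\<in>sh. a \<in> U \<and> b \<in> U)"
  proof (intro ballI impI)
    fix a b assume ab: "a \<in> S" "b \<in> S" "a \<noteq> b"
    then have "{a,b} \<in> pairs S" unfolding pairs_def by auto
    then have "{a,b} \<in> pairs_sh sh" using h by blast
    then show "\<exists>U\<in>sh. a \<in> U \<and> b \<in> U" unfolding pairs_sh_def pairs_def by blast
  qed
next
  assume h: "\<forall>a\<in>S. \<forall>b\<in>S. a \<noteq> b \<longrightarrow> (\<exists>U\<in>sh. a \<in> U \<and> b \<in> U)"
  show "pairs S \<subseteq> pairs_sh sh"
  proof
    fix T assume T: "T \<in> pairs S"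
    then have "card T = 2" "T \<subseteq> S" unfolding pairs_def by auto
    then obtain a b where ab: "T = {a,b}" "a \<noteq> b" by (meson card_2_iff)
    then have "a \<in> S" "b \<in> S" using \<open>T \<subseteq> S\<close> by auto
    then obtain U where "U \<in> sh" "a \<in> U" "b \<in> U" using h ab by blast
    then have "T \<in> pairs U" unfolding pairs_def using ab \<open>card T = 2\<close> by auto
    then show "T \<in> pairs_sh sh" unfolding pairs_sh_def using \<open>U \<in> sh\<close> by blast
  qed
qed

lemma rho_PS_cliq: "rho_PS VI sh = cliq VI (\<lambda>a b. \<exists>U\<in>sh. a \<in> U \<and> b \<in> U)"
  unfolding rho_PS_def cliq_def pairs_cond by blast

lemma PS_char: "PS VI = range (cliq VI)"
proof
  show "PS VI \<subseteq> range (cliq VI)" unfolding PS_def using rho_PS_cliq by blast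
next
  show "range (cliq VI) \<subseteq> PS VI"
  proof
    fix p assume "p \<in> range (cliq VI)"
    then obtain E where p: "p = cliq VI E" by blast
    define sh where "sh = {{a,b} | a b. a \<in> VI \<and> b \<in> VI \<and> a \<noteq> b \<and> E a b \<and> E b a}"
    have shSH: "sh \<in> SH VI" unfolding sh_def SH_def SG_def by auto
    have eq: "(\<exists>U\<in>sh. a \<in> U \<and> b \<in> U) \<longleftrightarrow> E a b \<and> E b a"
      if "a \<in> VI" "b \<in> VI" "a \<noteq> b" for a b
    proof
      assume "\<exists>U\<in>sh. a \<in> U \<and> b \<in> U"
      then obtain U where U: "U \<in> sh" "a \<in> U" "b \<in> U" by blast
      then obtain c d where cd: "U = {c,d}" "c \<noteq> d" "E c d" "E d c"
        unfolding sh_def by blast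
      then have "c \<noteq> d" "E c d" "E d c" "a \<in> {c,d}" "b \<in> {c,d}" using U by auto
      then show "E a b \<and> E b a" using that by auto
    next
      assume "E a b \<and> E b a"
      then have "{a,b} \<in> sh" unfolding sh_def using that by blast
      then show "\<exists>U\<in>sh. a \<in> U \<and> b \<in> U" by blast
    qed
    have "rho_PS VI sh = p"
    proof -
      have "rho_PS VI sh = cliq VI (\<lambda>a b. \<exists>U\<in>sh. a \<in> U \<and> b \<in> U)" by (rule rho_PS_cliq)
      also have "\<dots> = cliq VI E"
      proof -
        have iffS: "(\<forall>a\<in>S. \<forall>b\<in>S. a \<noteq> b \<longrightarrow> (\<exists>U\<in>sh. a \<in> U \<and> b \<in> U)) \<longleftrightarrow>
              (\<forall>a\<in>S. \<forall>b\<in>S. a \<noteq> b \<longrightarrow> E a b)" if S: "S \<in> SG VI" for S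
        proof -
          have SV: "S \<subseteq> VI" using S unfolding SG_def by blast
          show ?thesis
          proof
            assume h: "\<forall>a\<in>S. \<forall>b\<in>S. a \<noteq> b \<longrightarrow> (\<exists>U\<in>sh. a \<in> U \<and> b \<in> U)"
            show "\<forall>a\<in>S. \<forall>b\<in>S. a \<noteq> b \<longrightarrow> E a b"
            proof (intro ballI impI)
              fix a b assume "a \<in> S" "b \<in> S" "a \<noteq> b"
              then show "E a b" using h eq SV by blast
            qed
          next
            assume h: "\<forall>a\<in>S. \<forall>b\<in>S. a \<noteq> b \<longrightarrow> E a b"
            show "\<forall>a\<in>S. \<forall>b\<in>S. a \<noteq> b \<longrightarrow> (\<exists>U\<in>sh. a \<in> U \<and> b \<in> U)"
            proof (intro ballI impI)
              fix a b assume ab: "a \<in> S" "b \<in> S" "a \<noteq> b"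
              then have "E a b \<and> E b a" using h by auto
              then show "\<exists>U\<in>sh. a \<in> U \<and> b \<in> U" using eq ab SV by blast
            qed
          qed
        qed
        show ?thesis unfolding cliq_def
        proof (rule Collect_cong)
          fix S
          show "(S \<in> SG VI \<and> (\<forall>a\<in>S. \<forall>b\<in>S. a \<noteq> b \<longrightarrow> (\<exists>U\<in>sh. a \<in> U \<and> b \<in> U))) =
                (S \<in> SG VI \<and> (\<forall>a\<in>S. \<forall>b\<in>S. a \<noteq> b \<longrightarrow> E a b))"
            using iffS[of S] by blast
        qed
      qed
      finally show ?thesis using p by simp
    qed
    then show "p \<in> PS VI" unfolding PS_def using shSH by blast
  qed
qed

lemma cliq_C:
  assumes fin: "finite VI"
  shows "cliq VI E \<in> PSD_plus VI"
  unfolding CL[OF fin] closedsh_def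
proof (intro conjI ballI impI)
  show "cliq VI E \<subseteq> SG VI" unfolding cliq_def by blast
next
  fix x assume "x \<in> VI"
  then show "{x} \<in> cliq VI E" unfolding cliq_def SG_def by auto
next
  fix S assume S: "S \<in> SG VI" and h: "\<forall>a\<in>S. \<forall>b\<in>S. \<exists>U\<in>cliq VI E. a \<in> U \<and> b \<in> U \<and> U \<subseteq> S"
  have "E a b" if "a \<in> S" "b \<in> S" "a \<noteq> b" for a b
  proof -
    have "\<exists>U\<in>cliq VI E. a \<in> U \<and> b \<in> U \<and> U \<subseteq> S" using bspec[OF bspec[OF h that(1)] that(2)] .
    then obtain U where "U \<in> cliq VI E" "a \<in> U" "b \<in> U" by blast
    then show ?thesis using that unfolding cliq_def by blast
  qed
  then show "S \<in> cliq VI E" unfolding cliq_def using S by blast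
qed

lemma cliq_inter:
  assumes X: "X \<subseteq> range (cliq VI)"
  shows "SG VI \<inter> \<Inter>X \<in> range (cliq VI)"
proof -
  have "\<forall>x\<in>X. \<exists>E. x = cliq VI E" using X by blast
  then obtain f where f: "\<forall>x\<in>X. x = cliq VI (f x)" by metis
  have "SG VI \<inter> \<Inter>X = cliq VI (\<lambda>a b. \<forall>x\<in>X. f x a b)"
  proof
    show "SG VI \<inter> \<Inter>X \<subseteq> cliq VI (\<lambda>a b. \<forall>x\<in>X. f x a b)"
    proof
      fix S assume S: "S \<in> SG VI \<inter> \<Inter>X"
      have "\<forall>x\<in>X. S \<in> cliq VI (f x)" using S f by auto
      then show "S \<in> cliq VI (\<lambda>a b. \<forall>x\<in>X. f x a b)" using S unfolding cliq_def by blast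
    qed
  next
    show "cliq VI (\<lambda>a b. \<forall>x\<in>X. f x a b) \<subseteq> SG VI \<inter> \<Inter>X"
    proof
      fix S assume S: "S \<in> cliq VI (\<lambda>a b. \<forall>x\<in>X. f x a b)"
      have "\<forall>x\<in>X. S \<in> cliq VI (f x)" using S unfolding cliq_def by blast
      then have "\<forall>x\<in>X. S \<in> x" using f by auto
      then show "S \<in> SG VI \<inter> \<Inter>X" using S unfolding cliq_def by blast
    qed
  qed
  then show ?thesis by blast
qed

lemma mi_VI:
  assumes "x \<noteq> y"
  shows "mi VI VI x y = cliq VI (\<lambda>a b. {a,b} \<noteq> {x,y})"
proof -
  have "(\<not> (x \<in> S \<and> y \<in> S \<and> S \<subseteq> VI)) \<longleftrightarrow> (\<forall>a\<in>S. \<forall>b\<in>S. a \<noteq> b \<longrightarrow> {a,b} \<noteq> {x,y})"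
    if S: "S \<in> SG VI" for S
  proof -
    have SV: "S \<subseteq> VI" using S unfolding SG_def by blast
    show ?thesis
    proof
      assume h: "\<not> (x \<in> S \<and> y \<in> S \<and> S \<subseteq> VI)"
      show "\<forall>a\<in>S. \<forall>b\<in>S. a \<noteq> b \<longrightarrow> {a,b} \<noteq> {x,y}"
      proof (intro ballI impI)
        fix a b assume "a \<in> S" "b \<in> S" "a \<noteq> b"
        then show "{a,b} \<noteq> {x,y}" using h SV by auto
      qed
    next
      assume h: "\<forall>a\<in>S. \<forall>b\<in>S. a \<noteq> b \<longrightarrow> {a,b} \<noteq> {x,y}"
      show "\<not> (x \<in> S \<and> y \<in> S \<and> S \<subseteq> VI)"
        using h assms by blast
    qed
  qed
  then show ?thesis unfolding mi_def cliq_def by blast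
qed

lemma cliq_gen:
  "cliq VI E = SG VI \<inter> \<Inter>{mi VI VI x y | x y. x \<in> VI \<and> y \<in> VI \<and> x \<noteq> y \<and> \<not> E x y}"
proof
  show "cliq VI E \<subseteq> SG VI \<inter> \<Inter>{mi VI VI x y | x y. x \<in> VI \<and> y \<in> VI \<and> x \<noteq> y \<and> \<not> E x y}"
  proof
    fix S assume S: "S \<in> cliq VI E"
    have "S \<in> mi VI VI x y" if "x \<in> VI" "y \<in> VI" "x \<noteq> y" "\<not> E x y" for x y
      using S that unfolding cliq_def mi_def by blast
    then show "S \<in> SG VI \<inter> \<Inter>{mi VI VI x y | x y. x \<in> VI \<and> y \<in> VI \<and> x \<noteq> y \<and> \<not> E x y}"
      using S unfolding cliq_def by blast
  qed
next
  show "SG VI \<inter> \<Inter>{mi VI VI x y | x y. x \<in> VI \<and> y \<in> VI \<and> x \<noteq> y \<and> \<not> E x y} \<subseteq> cliq VI E"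
  proof
    fix S assume S: "S \<in> SG VI \<inter> \<Inter>{mi VI VI x y | x y. x \<in> VI \<and> y \<in> VI \<and> x \<noteq> y \<and> \<not> E x y}"
    have SV: "S \<subseteq> VI" using S unfolding SG_def by blast
    have "E a b" if ab: "a \<in> S" "b \<in> S" "a \<noteq> b" for a b
    proof (rule ccontr)
      assume "\<not> E a b"
      then have "S \<in> mi VI VI a b" using S ab SV by blast
      then show False using ab SV unfolding mi_def by blast
    qed
    then show "S \<in> cliq VI E" using S unfolding cliq_def by blast
  qed
qed

lemma mi_C:
  assumes fin: "finite VI" and S: "S \<in> SG VI" and xy: "x \<in> S" "y \<in> S" "x \<noteq> y"
  shows "mi VI S x y \<in> PSD_plus VI"
  unfolding CL[OF fin] closedsh_def
proof (intro conjI ballI impI)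
  show "mi VI S x y \<subseteq> SG VI" unfolding mi_def by blast
next
  fix z assume "z \<in> VI"
  then have "{z} \<in> SG VI" unfolding SG_def by blast
  moreover have "\<not> (x \<in> {z} \<and> y \<in> {z})" using xy by blast
  ultimately show "{z} \<in> mi VI S x y" unfolding mi_def by blast
next
  fix S' assume S': "S' \<in> SG VI" and h: "\<forall>a\<in>S'. \<forall>b\<in>S'. \<exists>U\<in>mi VI S x y. a \<in> U \<and> b \<in> U \<and> U \<subseteq> S'"
  show "S' \<in> mi VI S x y"
  proof (rule ccontr)
    assume "S' \<notin> mi VI S x y"
    then have c: "x \<in> S'" "y \<in> S'" "S' \<subseteq> S" using S' unfolding mi_def by auto
    have "\<exists>U\<in>mi VI S x y. x \<in> U \<and> y \<in> U \<and> U \<subseteq> S'" using bspec[OF bspec[OF h c(1)] c(2)] .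
    then obtain U where U: "U \<in> mi VI S x y" "x \<in> U" "y \<in> U" "U \<subseteq> S'" by blast
    then have "U \<notin> mi VI S x y" using c unfolding mi_def by blast
    then show False using U(1) by contradiction
  qed
qed

lemma mi_irr:
  assumes fin: "finite VI" and S: "S \<in> SG VI" and xy: "x \<in> S" "y \<in> S" "x \<noteq> y"
    and X: "X \<subseteq> PSD_plus VI" and eq: "mi VI S x y = SG VI \<inter> \<Inter>X"
  shows "mi VI S x y \<in> X"
proof -
  have "S \<notin> mi VI S x y" unfolding mi_def using xy by blast
  then obtain x0 where x0: "x0 \<in> X" "S \<notin> x0" using eq S by blast
  have sub: "mi VI S x y \<subseteq> x0" using eq x0 by blast
  have cl: "closedsh VI x0" using X x0 CL[OF fin] by blast
  have SV: "S \<subseteq> VI" using S unfolding SG_def by blast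
  have "x0 \<subseteq> mi VI S x y"
  proof
    fix U assume U: "U \<in> x0"
    show "U \<in> mi VI S x y"
    proof (rule ccontr)
      assume "U \<notin> mi VI S x y"
      moreover have "U \<in> SG VI" using U closedsh_sub[OF cl] by blast
      ultimately have Ux: "x \<in> U" "y \<in> U" "U \<subseteq> S" unfolding mi_def by auto
      have "\<exists>V\<in>x0. a \<in> V \<and> b \<in> V \<and> V \<subseteq> S" if ab: "a \<in> S" "b \<in> S" for a b
      proof (cases "x \<in> {a,b} \<and> y \<in> {a,b}")
        case True
        then have "a \<in> U" "b \<in> U" using Ux xy(3) by auto
        then show ?thesis using U Ux(3) by blast
      next
        case False
        have "{a,b} \<in> SG VI" using ab SV unfolding SG_def by auto
        then have "{a,b} \<in> mi VI S x y" using False unfolding mi_def by blast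
        then show ?thesis using sub ab by blast
      qed
      then have "S \<in> x0" using closedsh_cl[OF cl S] by blast
      then show False using x0 by blast
    qed
  qed
  then have "x0 = mi VI S x y" using sub by blast
  then show ?thesis using x0 by blast
qed

lemma moore_PSD:
  assumes fin: "finite VI"
  shows "moore (PSD_plus VI) (SG VI)"
  unfolding moore_def
proof (intro conjI allI impI)
  show "PSD_plus VI \<subseteq> Pow (SG VI)" using CL[OF fin] unfolding closedsh_def by blast
next
  fix X assume X: "X \<subseteq> PSD_plus VI"
  have cl: "\<forall>x\<in>X. closedsh VI x" using X CL[OF fin] by blast
  have "closedsh VI (SG VI \<inter> \<Inter>X)" unfolding closedsh_def
  proof (intro conjI ballI impI)
    show "SG VI \<inter> \<Inter>X \<subseteq> SG VI" by blast
  next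
    fix z assume z: "z \<in> VI"
    have "{z} \<in> SG VI" using z unfolding SG_def by auto
    moreover have "\<forall>x\<in>X. {z} \<in> x" using cl z unfolding closedsh_def by blast
    ultimately show "{z} \<in> SG VI \<inter> \<Inter>X" by blast
  next
    fix S assume S: "S \<in> SG VI" and h: "\<forall>a\<in>S. \<forall>b\<in>S. \<exists>U\<in>SG VI \<inter> \<Inter>X. a \<in> U \<and> b \<in> U \<and> U \<subseteq> S"
    have "S \<in> x" if x: "x \<in> X" for x
    proof -
      have "\<forall>a\<in>S. \<forall>b\<in>S. \<exists>U\<in>x. a \<in> U \<and> b \<in> U \<and> U \<subseteq> S"
      proof (intro ballI)
        fix a b assume ab: "a \<in> S" "b \<in> S"
        have "\<exists>U\<in>SG VI \<inter> \<Inter>X. a \<in> U \<and> b \<in> U \<and> U \<subseteq> S" using bspec[OF bspec[OF h ab(1)] ab(2)] .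
        then obtain U where "U \<in> SG VI \<inter> \<Inter>X" "a \<in> U" "b \<in> U" "U \<subseteq> S" by blast
        then show "\<exists>U\<in>x. a \<in> U \<and> b \<in> U \<and> U \<subseteq> S" using x by blast
      qed
      then show ?thesis using cl x S unfolding closedsh_def by blast
    qed
    then show "S \<in> SG VI \<inter> \<Inter>X" using S by blast
  qed
  then show "SG VI \<inter> \<Inter>X \<in> PSD_plus VI" using CL[OF fin] by blast
qed

theorem theorem5p2:
  fixes VI :: "'a set"
  assumes "finite VI" and "VI \<noteq> {}"
  shows "wpc (PSD_plus VI) (PS VI) = {sh \<in> PSD VI. VI \<in> sh \<and> (\<forall>x\<in>VI. {x} \<in> sh)}
     \<and> wpc (PSD_plus VI) (wpc (PSD_plus VI) (PS VI)) = PS VI"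
proof -
  note fin = assms(1)
  define C where "C = PSD_plus VI"
  define A where "A = {sh \<in> PSD VI. VI \<in> sh \<and> (\<forall>x\<in>VI. {x} \<in> sh)}"
  have m: "moore C (SG VI)" unfolding C_def using moore_PSD[OF fin] .
  have AC: "A = {sh \<in> C. VI \<in> sh}" unfolding A_def C_def PSD_plus_def by blast
  have VISG: "VI \<in> SG VI" using assms(2) unfolding SG_def by blast
  have PSC: "PS VI \<subseteq> C" unfolding C_def PS_char using cliq_C[OF fin] by blast
  have uP: "is_uco C (PS VI)" unfolding uco_iff[OF m] using PSC cliq_inter PS_char by metis
  have uA: "is_uco C A" unfolding uco_iff[OF m]
  proof (intro conjI allI impI)
    show "A \<subseteq> C" using AC by blast
  next
    fix X assume X: "X \<subseteq> A"
    then have "SG VI \<inter> \<Inter>X \<in> C" using moore_D[OF m] AC by blast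
    moreover have "VI \<in> SG VI \<inter> \<Inter>X" using X VISG AC by blast
    ultimately show "SG VI \<inter> \<Inter>X \<in> A" using AC by blast
  qed
  have gen: "Mc (SG VI) (PS VI \<union> A) = C"
  proof
    have "A \<subseteq> C" using AC by blast
    then have "PS VI \<union> A \<subseteq> C" using PSC by simp
    then have "is_uco C (Mc (SG VI) (PS VI \<union> A))" by (rule Mc_uco[OF m])
    then show "Mc (SG VI) (PS VI \<union> A) \<subseteq> C" unfolding is_uco_def by simp
  next
    show "C \<subseteq> Mc (SG VI) (PS VI \<union> A)"
    proof
      fix sh assume sh: "sh \<in> C"
      have cl: "closedsh VI sh" using sh CL[OF fin] unfolding C_def by blast
      have shT: "sh \<subseteq> SG VI" using closedsh_sub[OF cl] .
      show "sh \<in> Mc (SG VI) (PS VI \<union> A)"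
      proof (cases "VI \<in> sh")
        case True
        then have "sh \<in> A" using AC sh by blast
        moreover have "sh = SG VI \<inter> \<Inter>{sh}" using shT by blast
        ultimately show ?thesis unfolding Mc_def by blast
      next
        case False
        have "\<not> (\<forall>a\<in>VI. \<forall>b\<in>VI. \<exists>U\<in>sh. a \<in> U \<and> b \<in> U \<and> U \<subseteq> VI)"
          using False closedsh_cl[OF cl VISG] by blast
        then obtain x y where xy: "x \<in> VI" "y \<in> VI" "\<not> (\<exists>U\<in>sh. x \<in> U \<and> y \<in> U \<and> U \<subseteq> VI)"
          by blast
        have xny: "x \<noteq> y"
        proof
          assume "x = y"
          moreover have "{x} \<in> sh" using closedsh_sing[OF cl xy(1)] .
          ultimately show False using xy by blast
        qed
        define k where "k = mi VI VI x y"
        have "k = cliq VI (\<lambda>a b. {a,b} \<noteq> {x,y})" unfolding k_def using mi_VI[OF xny] by simp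
        then have kP: "k \<in> PS VI" by (metis PS_char rangeI)
        define sh' where "sh' = insert VI sh"
        have "closedsh VI sh'" unfolding closedsh_def
        proof (intro conjI ballI impI)
          show "sh' \<subseteq> SG VI" unfolding sh'_def using shT VISG by blast
        next
          fix z assume "z \<in> VI"
          then show "{z} \<in> sh'" using closedsh_sing[OF cl] unfolding sh'_def by blast
        next
          fix S assume S: "S \<in> SG VI" and h: "\<forall>a\<in>S. \<forall>b\<in>S. \<exists>U\<in>sh'. a \<in> U \<and> b \<in> U \<and> U \<subseteq> S"
          show "S \<in> sh'"
          proof (cases "S = VI")
            case True
            then show ?thesis unfolding sh'_def by blast
          next
            case False
            have SV: "S \<subseteq> VI" using S unfolding SG_def by blast
            have "\<forall>a\<in>S. \<forall>b\<in>S. \<exists>U\<in>sh. a \<in> U \<and> b \<in> U \<and> U \<subseteq> S"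
            proof (intro ballI)
              fix a b assume ab: "a \<in> S" "b \<in> S"
              have "\<exists>U\<in>sh'. a \<in> U \<and> b \<in> U \<and> U \<subseteq> S" using bspec[OF bspec[OF h ab(1)] ab(2)] .
              then obtain U where U: "U \<in> sh'" "a \<in> U" "b \<in> U" "U \<subseteq> S" by blast
              have "U \<noteq> VI" using U(4) SV False by blast
              then show "\<exists>U\<in>sh. a \<in> U \<and> b \<in> U \<and> U \<subseteq> S" using U unfolding sh'_def by blast
            qed
            then have "S \<in> sh" using closedsh_cl[OF cl S] by blast
            then show ?thesis unfolding sh'_def by blast
          qed
        qed
        then have "sh' \<in> C" unfolding C_def using CL[OF fin] by simp
        moreover have "VI \<in> sh'" unfolding sh'_def by simp
        ultimately have "sh' \<in> A" using AC by simp
        have "sh = SG VI \<inter> \<Inter>{k, sh'}"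
        proof
          have "sh \<subseteq> k"
          proof
            fix U assume U: "U \<in> sh"
            then have "U \<subseteq> VI" using shT unfolding SG_def by blast
            then show "U \<in> k" using U xy shT unfolding k_def mi_def by blast
          qed
          then show "sh \<subseteq> SG VI \<inter> \<Inter>{k, sh'}" using shT unfolding sh'_def by blast
        next
          have "VI \<notin> k" unfolding k_def mi_def using xy by blast
          then show "SG VI \<inter> \<Inter>{k, sh'} \<subseteq> sh" unfolding sh'_def by blast
        qed
        moreover have "{k, sh'} \<subseteq> PS VI \<union> A" using kP \<open>sh' \<in> A\<close> by simp
        ultimately show ?thesis unfolding Mc_def by blast
      qed
    qed
  qed
  define K1 where "K1 = {mi VI S x y | S x y. S \<in> SG VI \<and> S \<noteq> VI \<and> x \<in> S \<and> y \<in> S \<and> x \<noteq> y}"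
  have K1A: "K1 \<subseteq> A"
  proof
    fix k assume "k \<in> K1"
    then obtain S x y where k: "k = mi VI S x y" "S \<in> SG VI" "S \<noteq> VI" "x \<in> S" "y \<in> S" "x \<noteq> y"
      unfolding K1_def by blast
    have "k \<in> C" using mi_C[OF fin k(2,4,5,6)] k(1) unfolding C_def by blast
    moreover have "S \<subseteq> VI" using k(2) unfolding SG_def by blast
    then have "VI \<in> k" using k VISG unfolding mi_def by blast
    ultimately show "k \<in> A" using AC by blast
  qed
  have AK1: "A \<subseteq> Mc (SG VI) K1"
  proof
    fix sh assume sh: "sh \<in> A"
    have cl: "closedsh VI sh" using sh AC CL[OF fin] unfolding C_def by blast
    have shT: "sh \<subseteq> SG VI" using closedsh_sub[OF cl] .
    have "sh = SG VI \<inter> \<Inter>{k \<in> K1. sh \<subseteq> k}"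
    proof
      show "sh \<subseteq> SG VI \<inter> \<Inter>{k \<in> K1. sh \<subseteq> k}" using shT by blast
    next
      show "SG VI \<inter> \<Inter>{k \<in> K1. sh \<subseteq> k} \<subseteq> sh"
      proof
        fix S assume S: "S \<in> SG VI \<inter> \<Inter>{k \<in> K1. sh \<subseteq> k}"
        show "S \<in> sh"
        proof (rule ccontr)
          assume nS: "S \<notin> sh"
          have SG: "S \<in> SG VI" using S by blast
          have SV: "S \<subseteq> VI" using SG unfolding SG_def by blast
          have "\<not> (\<forall>a\<in>S. \<forall>b\<in>S. \<exists>U\<in>sh. a \<in> U \<and> b \<in> U \<and> U \<subseteq> S)"
            using nS closedsh_cl[OF cl SG] by blast
          then obtain a b where ab: "a \<in> S" "b \<in> S" "\<not> (\<exists>U\<in>sh. a \<in> U \<and> b \<in> U \<and> U \<subseteq> S)"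
            by blast
          have anb: "a \<noteq> b"
          proof
            assume "a = b"
            moreover have "{a} \<in> sh" using closedsh_sing[OF cl] ab SV by blast
            ultimately show False using ab by blast
          qed
          have SnV: "S \<noteq> VI" using nS sh AC by blast
          have "mi VI S a b \<in> K1" unfolding K1_def using SG SnV ab anb by blast
          moreover have "sh \<subseteq> mi VI S a b" using shT ab unfolding mi_def by blast
          ultimately have "S \<in> mi VI S a b" using S by blast
          then show False using ab unfolding mi_def by blast
        qed
      qed
    qed
    moreover have "{k \<in> K1. sh \<subseteq> k} \<subseteq> K1" by blast
    ultimately show "sh \<in> Mc (SG VI) K1" unfolding Mc_def by blast
  qed
  have K1P: "K1 \<inter> PS VI = {}"
  proof (rule ccontr)
    assume "K1 \<inter> PS VI \<noteq> {}"
    then obtain k where k1: "k \<in> K1" and kP: "k \<in> PS VI" by blast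
    then obtain S x y where k: "k = mi VI S x y" "S \<in> SG VI" "S \<noteq> VI" "x \<in> S" "y \<in> S" "x \<noteq> y"
      unfolding K1_def by blast
    obtain E where E: "k = cliq VI E" using kP PS_char by blast
    have "VI \<in> k" using k1 K1A AC by blast
    then have "\<forall>a\<in>VI. \<forall>b\<in>VI. a \<noteq> b \<longrightarrow> E a b" using E unfolding cliq_def by blast
    moreover have "S \<subseteq> VI" using k(2) unfolding SG_def by blast
    ultimately have "S \<in> k" using E k(2) unfolding cliq_def by blast
    then show False using k unfolding mi_def by blast
  qed
  have irr1: "\<forall>k\<in>K1. \<forall>X. X \<subseteq> C \<and> k = SG VI \<inter> \<Inter>X \<longrightarrow> k \<in> X"
  proof (intro ballI allI impI)
    fix k X assume k1: "k \<in> K1" and X: "X \<subseteq> C \<and> k = SG VI \<inter> \<Inter>X"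
    from k1 obtain S x y where k: "k = mi VI S x y" "S \<in> SG VI" "S \<noteq> VI" "x \<in> S" "y \<in> S" "x \<noteq> y"
      unfolding K1_def by blast
    have XC: "X \<subseteq> PSD_plus VI" using X unfolding C_def by simp
    have "mi VI S x y = SG VI \<inter> \<Inter>X" using X k(1) by simp
    then have "mi VI S x y \<in> X" by (rule mi_irr[OF fin k(2,4,5,6) XC])
    then show "k \<in> X" using k(1) by simp
  qed
  have w1: "wpc C (PS VI) = A"
    using wpc_lemma[OF m uP uA gen K1A AK1 K1P irr1] .
  define K2 where "K2 = {mi VI VI x y | x y. x \<in> VI \<and> y \<in> VI \<and> x \<noteq> y}"
  have K2P: "K2 \<subseteq> PS VI"
  proof
    fix k assume "k \<in> K2"
    then obtain x y where k: "k = mi VI VI x y" "x \<noteq> y" unfolding K2_def by blast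
    then have "k = cliq VI (\<lambda>a b. {a,b} \<noteq> {x,y})" using mi_VI[OF k(2)] by simp
    then show "k \<in> PS VI" by (metis PS_char rangeI)
  qed
  have PK2: "PS VI \<subseteq> Mc (SG VI) K2"
  proof
    fix p assume "p \<in> PS VI"
    then obtain E where p: "p = cliq VI E" using PS_char by blast
    have "{mi VI VI x y | x y. x \<in> VI \<and> y \<in> VI \<and> x \<noteq> y \<and> \<not> E x y} \<subseteq> K2"
      unfolding K2_def by blast
    then show "p \<in> Mc (SG VI) K2" using p cliq_gen[of VI E] unfolding Mc_def by blast
  qed
  have K2A: "K2 \<inter> A = {}"
  proof -
    have "VI \<notin> k" if "k \<in> K2" for k
      using that unfolding K2_def mi_def by blast
    then show ?thesis using AC by blast
  qed
  have irr2: "\<forall>k\<in>K2. \<forall>X. X \<subseteq> C \<and> k = SG VI \<inter> \<Inter>X \<longrightarrow> k \<in> X"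
  proof (intro ballI allI impI)
    fix k X assume k2: "k \<in> K2" and X: "X \<subseteq> C \<and> k = SG VI \<inter> \<Inter>X"
    from k2 obtain x y where k: "k = mi VI VI x y" "x \<in> VI" "y \<in> VI" "x \<noteq> y"
      unfolding K2_def by blast
    have XC: "X \<subseteq> PSD_plus VI" using X unfolding C_def by simp
    have "mi VI VI x y = SG VI \<inter> \<Inter>X" using X k(1) by simp
    then have "mi VI VI x y \<in> X" by (rule mi_irr[OF fin VISG k(2,3,4) XC])
    then show "k \<in> X" using k(1) by simp
  qed
  have gen2: "Mc (SG VI) (A \<union> PS VI) = C" using gen by (simp add: Un_commute)
  have w2: "wpc C A = PS VI"
    using wpc_lemma[OF m uA uP gen2 K2P PK2 K2A irr2] .
  show ?thesis using w1 w2 unfolding C_def A_def by simp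
qed

end
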